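(* Let $(X,m)$ be a $\sigma$-finite measure space, let $1<p<\infty$, let $\gamma>0$, and let $\{T_t:t>0\}$ be a one-parameter family of sublinear operators on $L^p(X,m)$ (i.e. $|T_t(f+h)|\le|T_tf|+|T_th|$ and $|T_t(cf)|=|c||T_tf|$), with $(x,t)\mapsto T_tf(x)$ measurable for each $f$. Assume there is $C_p>0$ with $\|\sup_{t>0}|T_tf|\|_{L^p(X,m)}\le C_p\|f\|_{L^p(X,m)}$ for all $f\in L^p(X,m)$, and that $\lim_{t\to0+}T_tf(x)=f(x)$ for $m$-a.e. $x$, for all $f$ in a dense subclass of $L^p(X,m)$. Then for every $f\in L^p(X,m)$, with $$E_{\lambda,\gamma/p}=\{(x,t)\in X\times(0,\infty):|T_tf(x)|>\lambda t^{\gamma/p}\},$$ the limit below exists and $$\frac1\gamma\|f\|_{L^p(X,m)}^p\le\lim_{\lambda\to\infty}\lambda^p\iint_{E_{\lambda,\gamma/p}}t^{\gamma-1}\,dt\,dm(x)\le\sup_{\lambda>0}\lambda^p\iint_{E_{\lambda,\gamma/p}}t^{\gamma-1}\,dt\,dm(x)\le\frac{C_p^p}{\gamma}\|f\|_{L^p(X,m)}^p.$$ *)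

theory Defs
  imports "HOL-Analysis.Analysis"
begin

definition Lp_space :: "'a measure \<Rightarrow> real \<Rightarrow> ('a \<Rightarrow> real) set" where
  "Lp_space M p = {f. f \<in> borel_measurable M \<and> integrable M (\<lambda>x. \<bar>f x\<bar> powr p)}"

definition Lp_norm :: "'a measure \<Rightarrow> real \<Rightarrow> ('a \<Rightarrow> real) \<Rightarrow> real" where
  "Lp_norm M p f = (\<integral>x. \<bar>f x\<bar> powr p \<partial>M) powr (1 / p)"

definition epow :: "ennreal \<Rightarrow> real \<Rightarrow> ennreal" where
  "epow a p = (if a = \<infinity> then \<infinity> else ennreal (enn2real a powr p))"

definition maximal_fun :: "(real \<Rightarrow> ('a \<Rightarrow> real) \<Rightarrow> 'a \<Rightarrow> real) \<Rightarrow> ('a \<Rightarrow> real) \<Rightarrow> 'a \<Rightarrow> ennreal" where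
  "maximal_fun T f x = (SUP t\<in>{0<..}. ennreal \<bar>T t f x\<bar>)"

definition E_set :: "(real \<Rightarrow> ('a \<Rightarrow> real) \<Rightarrow> 'a \<Rightarrow> real) \<Rightarrow> ('a \<Rightarrow> real) \<Rightarrow> real \<Rightarrow> real \<Rightarrow> ('a \<times> real) set" where
  "E_set T f lam s = {(x, t). 0 < t \<and> \<bar>T t f x\<bar> > lam * t powr s}"

definition level_integral ::
  "'a measure \<Rightarrow> (real \<Rightarrow> ('a \<Rightarrow> real) \<Rightarrow> 'a \<Rightarrow> real) \<Rightarrow> ('a \<Rightarrow> real) \<Rightarrow> real \<Rightarrow> real \<Rightarrow> real \<Rightarrow> ennreal" where
  "level_integral M T f p \<gamma> lam =
     ennreal (lam powr p) *
     (\<integral>\<^sup>+ x. (\<integral>\<^sup>+ t. indicator (E_set T f lam (\<gamma> / p)) (x, t) * ennreal (t powr (\<gamma> - 1)) \<partial>lborel) \<partial>M)"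

end

theory Submission
  imports Defs
begin


lemma T'_meas:
  fixes T :: "real \<Rightarrow> ('a \<Rightarrow> real) \<Rightarrow> 'a \<Rightarrow> real"
  assumes "(\<lambda>(x, t). T t h x) \<in> borel_measurable (M \<Otimes>\<^sub>M restrict_space lborel {0<..})"
  shows "(\<lambda>z. T (if 0 < snd z then snd z else 1) h (fst z)) \<in> borel_measurable (M \<Otimes>\<^sub>M lborel)"
proof -
  have m: "(\<lambda>z. (fst z, if 0 < snd z then snd z else (1::real))) \<in> measurable (M \<Otimes>\<^sub>M lborel) (M \<Otimes>\<^sub>M restrict_space lborel {0<..})"
    by (intro measurable_Pair measurable_restrict_space2) auto
  from measurable_comp[OF m assms] show ?thesis by (simp add: o_def)
qed

lemma F_meas:
  fixes T :: "real \<Rightarrow> ('a \<Rightarrow> real) \<Rightarrow> 'a \<Rightarrow> real"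
  assumes "(\<lambda>(x, t). T t h x) \<in> borel_measurable (M \<Otimes>\<^sub>M restrict_space lborel {0<..})"
  shows "(\<lambda>z. indicator (E_set T h lam s) z * ennreal (snd z powr g)) \<in> borel_measurable (M \<Otimes>\<^sub>M lborel)"
proof -
  note [measurable] = T'_meas[of T h M, OF assms]
  have "(\<lambda>z. indicator (E_set T h lam s) z * ennreal (snd z powr g)) =
     (\<lambda>z. (if 0 < snd z \<and> \<bar>T (if 0 < snd z then snd z else 1) h (fst z)\<bar> > lam * snd z powr s then 1 else 0) * ennreal (snd z powr g))"
    by (auto simp: E_set_def indicator_def fun_eq_iff split: prod.splits)
  also have "\<dots> \<in> borel_measurable (M \<Otimes>\<^sub>M lborel)" by measurable
  finally show ?thesis .
qed

lemma pow_integral: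
  fixes b g :: real assumes "b \<ge> 0" "g > 0"
  shows "(\<integral>\<^sup>+t. indicator {0<..<b} t * ennreal (t powr (g - 1)) \<partial>lborel) = ennreal (b powr g / g)"
proof -
  have "((\<lambda>x. x powr (g - 1)) has_integral (b powr (g - 1 + 1) / (g - 1 + 1))) {0..b}"
    by (rule has_integral_powr_from_0) (use assms in auto)
  then have "((\<lambda>x. x powr (g - 1)) has_integral (b powr g / g)) {0<..<b}"
    by (simp add: has_integral_Icc_iff_Ioo)
  from nn_integral_has_integral_lebesgue[OF _ this]
  have "integral\<^sup>N lborel (\<lambda>x. ennreal (indicator {0<..<b} x * x powr (g - 1))) = ennreal (b powr g / g)"
    by simp
  then show ?thesis by (simp add: indicator_mult_ennreal mult.commute)
qed




lemma lam_pow_eq: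
  fixes lam c p g :: real
  assumes "lam > 0" "c \<ge> 0" "p > 0" "g > 0"
  shows "ennreal (lam powr p) * ennreal (((c / lam) powr (p / g)) powr g / g) = ennreal (c powr p / g)"
proof -
  have "((c / lam) powr (p / g)) powr g = (c / lam) powr p"
    using assms by (simp add: powr_powr)
  also have "\<dots> = c powr p / lam powr p" using assms by (simp add: powr_divide)
  finally have e: "((c / lam) powr (p / g)) powr g = c powr p / lam powr p" .
  show ?thesis using assms
    by (simp add: e ennreal_mult[symmetric])
qed

lemma level_upper_gen:
  fixes T :: "real \<Rightarrow> ('a \<Rightarrow> real) \<Rightarrow> 'a \<Rightarrow> real" and lam c p g :: real
  assumes "lam > 0" "c \<ge> 0" "p > 0" "g > 0"
    and ae: "AE t in lborel. 0 < t \<longrightarrow> \<bar>T t h x\<bar> > lam * t powr (g / p) \<longrightarrow> lam * t powr (g / p) < c"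
  shows "ennreal (lam powr p) * (\<integral>\<^sup>+t. indicator (E_set T h lam (g / p)) (x, t) * ennreal (t powr (g - 1)) \<partial>lborel)
     \<le> ennreal (c powr p / g)"
proof -
  define b where "b = (c / lam) powr (p / g)"
  have b0: "b \<ge> 0" unfolding b_def by simp
  have "(\<integral>\<^sup>+t. indicator (E_set T h lam (g / p)) (x, t) * ennreal (t powr (g - 1)) \<partial>lborel)
      \<le> (\<integral>\<^sup>+t. indicator {0<..<b} t * ennreal (t powr (g - 1)) \<partial>lborel)"
  proof (rule nn_integral_mono_AE)
    show "AE t in lborel. indicator (E_set T h lam (g / p)) (x, t) * ennreal (t powr (g - 1))
        \<le> indicator {0<..<b} t * ennreal (t powr (g - 1))"
      using ae
    proof eventually_elim
      case (elim t)
      show ?case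
      proof (cases "(x, t) \<in> E_set T h lam (g / p)")
        case True
        then have t0: "0 < t" and lt: "\<bar>T t h x\<bar> > lam * t powr (g / p)" by (auto simp: E_set_def)
        with elim have "lam * t powr (g / p) < c" by auto
        then have "t powr (g / p) < c / lam" using assms by (simp add: field_simps)
        then have "(t powr (g / p)) powr (p / g) < (c / lam) powr (p / g)"
          using assms by (intro powr_less_mono2) auto
        then have "t < b" using t0 assms by (simp add: powr_powr b_def)
        then show ?thesis using True t0 by (simp add: indicator_def)
      qed simp
    qed
  qed
  also have "\<dots> = ennreal (b powr g / g)" by (rule pow_integral) (use b0 assms in auto)
  finally have "ennreal (lam powr p) * (\<integral>\<^sup>+t. indicator (E_set T h lam (g / p)) (x, t) * ennreal (t powr (g - 1)) \<partial>lborel)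
     \<le> ennreal (lam powr p) * ennreal (b powr g / g)" by (rule mult_left_mono) simp
  also have "\<dots> = ennreal (c powr p / g)" unfolding b_def by (rule lam_pow_eq) (use assms in auto)
  finally show ?thesis .
qed

lemma level_lower_gen:
  fixes T :: "real \<Rightarrow> ('a \<Rightarrow> real) \<Rightarrow> 'a \<Rightarrow> real" and lam c p g :: real
  assumes "lam > 0" "c \<ge> 0" "p > 0" "g > 0"
    and H: "\<And>t. 0 < t \<Longrightarrow> lam * t powr (g / p) < c \<Longrightarrow> \<bar>T t h x\<bar> > lam * t powr (g / p)"
  shows "ennreal (c powr p / g) \<le> ennreal (lam powr p) * (\<integral>\<^sup>+t. indicator (E_set T h lam (g / p)) (x, t) * ennreal (t powr (g - 1)) \<partial>lborel)"
proof -
  define b where "b = (c / lam) powr (p / g)"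
  have b0: "b \<ge> 0" unfolding b_def by simp
  have "(\<integral>\<^sup>+t. indicator {0<..<b} t * ennreal (t powr (g - 1)) \<partial>lborel)
     \<le> (\<integral>\<^sup>+t. indicator (E_set T h lam (g / p)) (x, t) * ennreal (t powr (g - 1)) \<partial>lborel)"
  proof (rule nn_integral_mono)
    fix t
    show "indicator {0<..<b} t * ennreal (t powr (g - 1)) \<le> indicator (E_set T h lam (g / p)) (x, t) * ennreal (t powr (g - 1))"
    proof (cases "t \<in> {0<..<b}")
      case True
      then have t0: "0 < t" "t < b" by auto
      then have "t powr (g / p) < b powr (g / p)"
        by (intro powr_less_mono2) (use assms in auto)
      also have "b powr (g / p) = c / lam" using assms by (simp add: b_def powr_powr)
      finally have "lam * t powr (g / p) < c" using assms by (simp add: field_simps)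
      with H[OF t0(1)] t0 have "(x, t) \<in> E_set T h lam (g / p)" by (auto simp: E_set_def)
      then show ?thesis using True by simp
    qed simp
  qed
  then have "ennreal (lam powr p) * ennreal (b powr g / g) \<le> ennreal (lam powr p) * (\<integral>\<^sup>+t. indicator (E_set T h lam (g / p)) (x, t) * ennreal (t powr (g - 1)) \<partial>lborel)"
    by (subst pow_integral[symmetric]) (use b0 assms in \<open>auto intro: mult_left_mono\<close>)
  moreover have "ennreal (lam powr p) * ennreal (b powr g / g) = ennreal (c powr p / g)"
    unfolding b_def by (rule lam_pow_eq) (use assms in auto)
  ultimately show ?thesis by simp
qed




lemma epow_mono: "a \<le> b \<Longrightarrow> p \<ge> 0 \<Longrightarrow> epow a p \<le> epow b p"
  by (cases a; cases b) (auto simp: epow_def top_unique intro!: ennreal_leI powr_mono2)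

lemma epow_meas[measurable]: assumes [measurable]: "(f::'a \<Rightarrow> ennreal) \<in> borel_measurable M" shows "(\<lambda>x. epow (f x) p) \<in> borel_measurable M"
  unfolding epow_def by measurable

locale setting =
  fixes M :: "'a measure" and T :: "real \<Rightarrow> ('a \<Rightarrow> real) \<Rightarrow> 'a \<Rightarrow> real"
    and p \<gamma> C :: real
  assumes sigma: "sigma_finite_measure M"
    and p: "1 < p"
    and gamma: "\<gamma> > 0"
    and subadd: "\<And>f h t. f \<in> Lp_space M p \<Longrightarrow> h \<in> Lp_space M p \<Longrightarrow> t > 0 \<Longrightarrow>
        AE x in M. \<bar>T t (\<lambda>y. f y + h y) x\<bar> \<le> \<bar>T t f x\<bar> + \<bar>T t h x\<bar>"
    and meas: "\<And>f. f \<in> Lp_space M p \<Longrightarrow>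
        (\<lambda>(x, t). T t f x) \<in> borel_measurable (M \<Otimes>\<^sub>M restrict_space lborel {0<..})"
    and Cpos: "C > 0"
    and maximal: "\<And>f. f \<in> Lp_space M p \<Longrightarrow>
        (\<integral>\<^sup>+ x. epow (maximal_fun T f x) p \<partial>M) \<le> ennreal ((C * Lp_norm M p f) powr p)"
begin

definition Bq :: "('a \<Rightarrow> real) \<Rightarrow> rat \<Rightarrow> 'a \<Rightarrow> ennreal" where
  "Bq h q x = (\<integral>\<^sup>+t. (if 0 < t \<and> real_of_rat q < \<bar>T (if 0 < t then t else 1) h x\<bar> then 1 else 0) \<partial>lborel)"

definition R :: "('a \<Rightarrow> real) \<Rightarrow> 'a \<Rightarrow> ennreal" where
  "R h x = (INF q. if Bq h q x = 0 then ennreal (real_of_rat q) else \<infinity>)"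

lemma R_meas:
  assumes h: "h \<in> Lp_space M p"
  shows "R h \<in> borel_measurable M"
proof -
  note [measurable] = T'_meas[of T h M, OF meas[OF h]]
  have [measurable]: "Bq h q \<in> borel_measurable M" for q
    unfolding Bq_def by measurable
  show ?thesis unfolding R_def by measurable
qed

lemma R_ae:
  assumes h: "h \<in> Lp_space M p" and x: "x \<in> space M" and fin: "R h x < \<infinity>"
  shows "AE t in lborel. 0 < t \<longrightarrow> \<bar>T t h x\<bar> \<le> enn2real (R h x)"
proof -
  note [measurable] = T'_meas[of T h M, OF meas[OF h]]
  have "AE t in lborel. Bq h q x = 0 \<longrightarrow> (0 < t \<longrightarrow> \<bar>T t h x\<bar> \<le> real_of_rat q)" for q
  proof (cases "Bq h q x = 0")
    case True
    have "(\<lambda>z. if 0 < snd z \<and> real_of_rat q < \<bar>T (if 0 < snd z then snd z else 1) h (fst z)\<bar> then 1 else 0::ennreal)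
       \<in> borel_measurable (M \<Otimes>\<^sub>M lborel)" by measurable
    from measurable_compose_Pair1[OF x this]
    have mt: "(\<lambda>t. if 0 < t \<and> real_of_rat q < \<bar>T (if 0 < t then t else 1) h x\<bar> then 1 else 0::ennreal) \<in> borel_measurable lborel"
      by (simp only: snd_conv fst_conv)
    have "AE t in lborel. (if 0 < t \<and> real_of_rat q < \<bar>T (if 0 < t then t else 1) h x\<bar> then 1 else 0::ennreal) = 0"
      using True unfolding Bq_def nn_integral_0_iff_AE[OF mt] .
    then show ?thesis by eventually_elim (auto simp: not_less split: if_splits)
  qed simp
  then have "AE t in lborel. \<forall>q. Bq h q x = 0 \<longrightarrow> (0 < t \<longrightarrow> \<bar>T t h x\<bar> \<le> real_of_rat q)"
    by (simp add: AE_all_countable)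
  then show ?thesis
  proof eventually_elim
    case (elim t)
    show ?case
    proof
      assume t: "0 < t"
      have "ennreal \<bar>T t h x\<bar> \<le> R h x" unfolding R_def
      proof (rule INF_greatest)
        fix q show "ennreal \<bar>T t h x\<bar> \<le> (if Bq h q x = 0 then ennreal (real_of_rat q) else \<infinity>)"
          using elim t by (cases "Bq h q x = 0") (simp_all add: ennreal_leI)
      qed
      also have "\<dots> = ennreal (enn2real (R h x))" using fin by simp
      finally show "\<bar>T t h x\<bar> \<le> enn2real (R h x)" by (simp add: ennreal_le_iff)
    qed
  qed
qed

lemma R_le:
  shows "R h x \<le> maximal_fun T h x"
proof (cases "maximal_fun T h x" rule: ennreal_cases)
  case (real m)
  have bnd: "\<bar>T t h x\<bar> \<le> m" if "0 < t" for t
  proof -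
    have "ennreal \<bar>T t h x\<bar> \<le> maximal_fun T h x" unfolding maximal_fun_def
      using that by (auto intro!: SUP_upper)
    then show ?thesis using real by (simp add: ennreal_le_iff)
  qed
  have le_q: "R h x \<le> ennreal (real_of_rat q)" if "m < real_of_rat q" for q
  proof -
    have "(\<lambda>t. if 0 < t \<and> real_of_rat q < \<bar>T (if 0 < t then t else 1) h x\<bar> then 1 else 0::ennreal) = (\<lambda>t. 0)"
      using bnd that by (force simp: fun_eq_iff)
    then have "Bq h q x = 0" unfolding Bq_def by simp
    then show ?thesis unfolding R_def by (intro INF_lower2[of q]) auto
  qed
  show ?thesis
  proof (rule ennreal_le_epsilon)
    fix e :: real assume "0 < e"
    obtain r where r: "r \<in> \<rat>" "m < r" "r < m + e" using Rats_dense_in_real[of m "m + e"] \<open>0 < e\<close> by auto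
    then obtain q where q: "r = real_of_rat q" by (auto elim: Rats_cases)
    have "R h x \<le> ennreal r" using le_q r q by auto
    also have "\<dots> \<le> ennreal (m + e)" using r by (auto intro: ennreal_leI)
    also have "\<dots> = maximal_fun T h x + ennreal e" using real \<open>0 < e\<close> by (simp add: ennreal_plus)
    finally show "R h x \<le> maximal_fun T h x + ennreal e" .
  qed
qed (simp add: top_unique)

lemma level_le_R:
  assumes h: "h \<in> Lp_space M p" and x: "x \<in> space M" and lam: "lam > 0"
  shows "ennreal (lam powr p) * (\<integral>\<^sup>+t. indicator (E_set T h lam (\<gamma> / p)) (x, t) * ennreal (t powr (\<gamma> - 1)) \<partial>lborel)
     \<le> ennreal (1 / \<gamma>) * epow (R h x) p"
proof (cases "R h x < \<infinity>")
  case True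
  have "ennreal (lam powr p) * (\<integral>\<^sup>+t. indicator (E_set T h lam (\<gamma> / p)) (x, t) * ennreal (t powr (\<gamma> - 1)) \<partial>lborel)
     \<le> ennreal (enn2real (R h x) powr p / \<gamma>)"
  proof (rule level_upper_gen)
    show "AE t in lborel. 0 < t \<longrightarrow> \<bar>T t h x\<bar> > lam * t powr (\<gamma> / p) \<longrightarrow> lam * t powr (\<gamma> / p) < enn2real (R h x)"
      using R_ae[OF h x True] by eventually_elim auto
  qed (use lam p gamma in auto)
  also have "\<dots> = ennreal (1 / \<gamma>) * epow (R h x) p"
    using True gamma by (simp add: epow_def ennreal_mult[symmetric])
  finally show ?thesis .
next
  case False
  then have "R h x = \<infinity>" by (simp add: less_top[symmetric])
  then show ?thesis using gamma by (simp add: epow_def ennreal_mult_top)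
qed

lemma int_R:
  assumes h: "h \<in> Lp_space M p"
  shows "(\<integral>\<^sup>+x. epow (R h x) p \<partial>M) \<le> ennreal ((C * Lp_norm M p h) powr p)"
proof -
  have "(\<integral>\<^sup>+x. epow (R h x) p \<partial>M) \<le> (\<integral>\<^sup>+x. epow (maximal_fun T h x) p \<partial>M)"
    by (rule nn_integral_mono, rule epow_mono[OF R_le]) (use p in simp)
  also have "\<dots> \<le> ennreal ((C * Lp_norm M p h) powr p)" by (rule maximal[OF h])
  finally show ?thesis .
qed

end



lemma powr_ge1_neg: "0 < (e::real) \<Longrightarrow> e \<le> 1 \<Longrightarrow> a \<le> 0 \<Longrightarrow> 1 \<le> e powr a"
  by (metis powr_mono2' powr_one_eq_one)

lemma conv_ineq:
  fixes u v p e :: real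
  assumes p: "p \<ge> 1" and e: "0 < e" "e < 1"
  shows "\<bar>u + v\<bar> powr p \<le> (1 - e) powr (1 - p) * \<bar>u\<bar> powr p + e powr (1 - p) * \<bar>v\<bar> powr p"
proof (cases "u = 0 \<or> v = 0")
  case True
  have g1: "1 \<le> e powr (1 - p)" "1 \<le> (1 - e) powr (1 - p)"
    using e p by (auto intro!: powr_ge1_neg)
  show ?thesis
  proof (cases "u = 0")
    case True
    have "\<bar>v\<bar> powr p \<le> e powr (1 - p) * \<bar>v\<bar> powr p"
      using g1 by (simp add: mult_le_cancel_right1)
    then show ?thesis using True by simp
  next
    case False
    with \<open>u = 0 \<or> v = 0\<close> have "v = 0" by simp
    have "\<bar>u\<bar> powr p \<le> (1 - e) powr (1 - p) * \<bar>u\<bar> powr p"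
      using g1 by (simp add: mult_le_cancel_right1)
    then show ?thesis using \<open>v = 0\<close> by simp
  qed
next
  case False
  define X where "X = \<bar>u\<bar> / (1 - e)"
  define Y where "Y = \<bar>v\<bar> / e"
  have X: "X > 0" and Y: "Y > 0" using False e by (auto simp: X_def Y_def)
  have s: "\<bar>u\<bar> + \<bar>v\<bar> = (1 - e) * X + e * Y" using e by (simp add: X_def Y_def)
  have "\<bar>u + v\<bar> powr p \<le> (\<bar>u\<bar> + \<bar>v\<bar>) powr p"
    using p by (intro powr_mono2) (auto intro: abs_triangle_ineq)
  also have "\<dots> = ((1 - e) *\<^sub>R X + e *\<^sub>R Y) powr p" using s by simp
  also have "\<dots> \<le> (1 - e) * X powr p + e * Y powr p"
    using convex_onD[OF powr_convex[OF p], of e X Y] X Y e by simp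
  also have "(1 - e) * X powr p = (1 - e) powr (1 - p) * \<bar>u\<bar> powr p"
    using e by (simp add: X_def powr_divide powr_diff field_simps)
  also have "e * Y powr p = e powr (1 - p) * \<bar>v\<bar> powr p"
    using e by (simp add: Y_def powr_divide powr_diff field_simps)
  finally show ?thesis .
qed


definition Np :: "'a measure \<Rightarrow> real \<Rightarrow> ('a \<Rightarrow> real) \<Rightarrow> real" where
  "Np M p h = (\<integral>x. \<bar>h x\<bar> powr p \<partial>M)"

lemma Np_nonneg: "Np M p h \<ge> 0" unfolding Np_def by (rule integral_nonneg_AE) auto

lemma Lp_norm_pow: "p > 0 \<Longrightarrow> Lp_norm M p h powr p = Np M p h"
  unfolding Lp_norm_def Np_def[symmetric] using Np_nonneg[of M p h] by (simp add: powr_powr)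

lemma Lp_add_bound:
  assumes f: "f \<in> Lp_space M p" and g: "g \<in> Lp_space M p" and p: "p \<ge> 1" and e: "0 < e" "e < 1"
  shows "integrable M (\<lambda>x. \<bar>f x + g x\<bar> powr p)"
    and "Np M p (\<lambda>x. f x + g x) \<le> (1 - e) powr (1 - p) * Np M p f + e powr (1 - p) * Np M p g"
proof -
  have [measurable]: "f \<in> borel_measurable M" "g \<in> borel_measurable M" using f g by (auto simp: Lp_space_def)
  have i: "integrable M (\<lambda>x. \<bar>f x\<bar> powr p)" "integrable M (\<lambda>x. \<bar>g x\<bar> powr p)" using f g by (auto simp: Lp_space_def)
  have i2: "integrable M (\<lambda>x. (1 - e) powr (1 - p) * \<bar>f x\<bar> powr p + e powr (1 - p) * \<bar>g x\<bar> powr p)"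
    using i by auto
  show int: "integrable M (\<lambda>x. \<bar>f x + g x\<bar> powr p)"
    by (rule Bochner_Integration.integrable_bound[OF i2]) (use conv_ineq[OF p e] in auto)
  have "Np M p (\<lambda>x. f x + g x) \<le> (\<integral>x. (1 - e) powr (1 - p) * \<bar>f x\<bar> powr p + e powr (1 - p) * \<bar>g x\<bar> powr p \<partial>M)"
    unfolding Np_def by (rule integral_mono[OF int i2]) (rule conv_ineq[OF p e])
  also have "\<dots> = (1 - e) powr (1 - p) * Np M p f + e powr (1 - p) * Np M p g"
    using i by (simp add: Np_def)
  finally show "Np M p (\<lambda>x. f x + g x) \<le> (1 - e) powr (1 - p) * Np M p f + e powr (1 - p) * Np M p g" .
qed

lemma Lp_neg: "f \<in> Lp_space M p \<Longrightarrow> (\<lambda>x. - f x) \<in> Lp_space M p"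
  by (auto simp: Lp_space_def)

lemma Np_neg: "Np M p (\<lambda>x. - f x) = Np M p f" by (simp add: Np_def)

lemma Lp_diff: "f \<in> Lp_space M p \<Longrightarrow> g \<in> Lp_space M p \<Longrightarrow> p \<ge> 1 \<Longrightarrow> (\<lambda>x. f x - g x) \<in> Lp_space M p"
  using Lp_add_bound(1)[of f M p "\<lambda>x. - g x" "1/2"] Lp_neg[of g M p]
  by (auto simp: Lp_space_def)




lemma pt_lim:
  fixes T :: "real \<Rightarrow> ('a \<Rightarrow> real) \<Rightarrow> 'a \<Rightarrow> real" and p \<gamma> r a :: real
  assumes p: "p > 0" and gam: "\<gamma> > 0"
    and bnd: "AE t in lborel. 0 < t \<longrightarrow> \<bar>T t g x\<bar> \<le> r"
    and lim: "((\<lambda>t. T t g x) \<longlongrightarrow> a) (at_right 0)"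
  shows "((\<lambda>lam. ennreal (lam powr p) * (\<integral>\<^sup>+t. indicator (E_set T g lam (\<gamma> / p)) (x, t) * ennreal (t powr (\<gamma> - 1)) \<partial>lborel))
           \<longlongrightarrow> ennreal (\<bar>a\<bar> powr p / \<gamma>)) at_top"
proof -
  define A where "A = \<bar>a\<bar> powr p / \<gamma>"
  define s where "s = \<gamma> / p"
  have s: "s > 0" using p gam by (simp add: s_def)
  have A0: "A \<ge> 0" using gam by (simp add: A_def)
  have labs: "((\<lambda>t. \<bar>T t g x\<bar>) \<longlongrightarrow> \<bar>a\<bar>) (at_right 0)" by (rule tendsto_rabs[OF lim])
  have root: "((m * \<gamma>) powr (1 / p)) powr p = m * \<gamma>" if "m \<ge> 0" for m
    using that p gam by (simp add: powr_powr)
  have Aeq: "A * \<gamma> = \<bar>a\<bar> powr p" using gam by (simp add: A_def)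
  show ?thesis unfolding A_def[symmetric] s_def[symmetric]
  proof (rule order_tendstoI)
    fix y assume y: "y < ennreal A"
    then obtain y' where y': "y = ennreal y'" "0 \<le> y'" by (cases y rule: ennreal_cases) auto
    with y have yA: "y' < A" by (simp add: ennreal_less_iff)
    define m where "m = (y' + A) / 2"
    define a' where "a' = (m * \<gamma>) powr (1 / p)"
    have m0: "m > 0" using yA y' by (simp add: m_def)
    have a'p: "a' powr p = m * \<gamma>" unfolding a'_def using m0 by (intro root) simp
    have a'0: "a' > 0" using m0 gam by (simp add: a'_def)
    have a'a: "a' < \<bar>a\<bar>"
    proof (rule ccontr)
      assume "\<not> a' < \<bar>a\<bar>"
      then have "\<bar>a\<bar> powr p \<le> a' powr p" using p by (intro powr_mono2) auto
      moreover have "\<gamma> * y' < \<gamma> * A" using gam yA by simp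
      ultimately show False using a'p Aeq unfolding m_def by (simp add: algebra_simps)
    qed
    from order_tendstoD(1)[OF labs a'a] obtain t0 where t0: "t0 > 0" "\<And>t. 0 < t \<Longrightarrow> t < t0 \<Longrightarrow> a' < \<bar>T t g x\<bar>"
      unfolding eventually_at_right_field by auto
    have t0s: "t0 powr s > 0" using t0 by simp
    show "\<forall>\<^sub>F lam in at_top. y < ennreal (lam powr p) * (\<integral>\<^sup>+t. indicator (E_set T g lam s) (x, t) * ennreal (t powr (\<gamma> - 1)) \<partial>lborel)"
    proof (rule eventually_at_top_linorderI[of "max 1 (a' / t0 powr s)"])
      fix lam assume lam: "max 1 (a' / t0 powr s) \<le> lam"
      then have lam0: "lam > 0" by simp
      have lt0: "a' \<le> lam * t0 powr s" using lam t0s by (simp add: field_simps)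
      have "ennreal (a' powr p / \<gamma>) \<le> ennreal (lam powr p) * (\<integral>\<^sup>+t. indicator (E_set T g lam (\<gamma> / p)) (x, t) * ennreal (t powr (\<gamma> - 1)) \<partial>lborel)"
      proof (rule level_lower_gen)
        fix t assume t: "0 < t" "lam * t powr (\<gamma> / p) < a'"
        have "t < t0"
        proof (rule ccontr)
          assume "\<not> t < t0"
          then have "t0 powr s \<le> t powr s" using s t0 by (intro powr_mono2) auto
          then have "lam * t0 powr s \<le> lam * t powr s" using lam0 by simp
          then show False using t lt0 by (simp add: s_def)
        qed
        then show "\<bar>T t g x\<bar> > lam * t powr (\<gamma> / p)" using t0(2)[OF t(1)] t by simp
      qed (use lam0 a'0 p gam in auto)
      moreover have "a' powr p / \<gamma> = m" using a'p gam by simp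
      moreover have "y < ennreal m" using y' yA m0 by (simp add: ennreal_less_iff m_def)
      ultimately show "y < ennreal (lam powr p) * (\<integral>\<^sup>+t. indicator (E_set T g lam s) (x, t) * ennreal (t powr (\<gamma> - 1)) \<partial>lborel)"
        unfolding s_def by simp
    qed
  next
    fix y assume y: "ennreal A < y"
    define y' where "y' = (if y = \<infinity> then A + 1 else enn2real y)"
    have y'1: "A < y'" and y'2: "ennreal y' \<le> y"
      using y A0 by (cases y rule: ennreal_cases; auto simp: y'_def ennreal_less_iff)+
    define m where "m = (y' + A) / 2"
    define a' where "a' = (m * \<gamma>) powr (1 / p)"
    have m0: "m > 0" using y'1 A0 by (simp add: m_def)
    have a'p: "a' powr p = m * \<gamma>" unfolding a'_def using m0 by (intro root) simp
    have a'0: "a' > 0" using m0 gam by (simp add: a'_def)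
    have a'a: "\<bar>a\<bar> < a'"
    proof (rule ccontr)
      assume "\<not> \<bar>a\<bar> < a'"
      then have "a' powr p \<le> \<bar>a\<bar> powr p" using p a'0 by (intro powr_mono2) auto
      moreover have "\<gamma> * A < \<gamma> * y'" using gam y'1 by simp
      ultimately show False using a'p Aeq unfolding m_def by (simp add: algebra_simps)
    qed
    from order_tendstoD(2)[OF labs a'a] obtain t0 where t0: "t0 > 0" "\<And>t. 0 < t \<Longrightarrow> t < t0 \<Longrightarrow> \<bar>T t g x\<bar> < a'"
      unfolding eventually_at_right_field by auto
    have t0s: "t0 powr s > 0" using t0 by simp
    show "\<forall>\<^sub>F lam in at_top. ennreal (lam powr p) * (\<integral>\<^sup>+t. indicator (E_set T g lam s) (x, t) * ennreal (t powr (\<gamma> - 1)) \<partial>lborel) < y"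
    proof (rule eventually_at_top_linorderI[of "max 1 ((\<bar>r\<bar> + 1) / t0 powr s)"])
      fix lam assume lam: "max 1 ((\<bar>r\<bar> + 1) / t0 powr s) \<le> lam"
      then have lam0: "lam > 0" by simp
      have lt0: "\<bar>r\<bar> + 1 \<le> lam * t0 powr s" using lam t0s by (simp add: field_simps)
      have "ennreal (lam powr p) * (\<integral>\<^sup>+t. indicator (E_set T g lam (\<gamma> / p)) (x, t) * ennreal (t powr (\<gamma> - 1)) \<partial>lborel) \<le> ennreal (a' powr p / \<gamma>)"
      proof (rule level_upper_gen)
        show "AE t in lborel. 0 < t \<longrightarrow> \<bar>T t g x\<bar> > lam * t powr (\<gamma> / p) \<longrightarrow> lam * t powr (\<gamma> / p) < a'"
          using bnd
        proof eventually_elim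
          case (elim t)
          show ?case
          proof (intro impI)
            assume t: "0 < t" and gt: "\<bar>T t g x\<bar> > lam * t powr (\<gamma> / p)"
            show "lam * t powr (\<gamma> / p) < a'"
            proof (cases "t < t0")
              case True then show ?thesis using t0(2)[OF t] gt by simp
            next
              case False
              then have "t0 powr s \<le> t powr s" using s t0 by (intro powr_mono2) auto
              then have "lam * t0 powr s \<le> lam * t powr s" using lam0 by simp
              then show ?thesis using lt0 gt elim t by (simp add: s_def)
            qed
          qed
        qed
      qed (use lam0 a'0 p gam in auto)
      moreover have "a' powr p / \<gamma> = m" using a'p gam by simp
      moreover have "ennreal m < y"
        using y'1 y'2 m0 A0 by (intro less_le_trans[OF _ y'2]) (simp add: ennreal_less_iff m_def)
      ultimately show "ennreal (lam powr p) * (\<integral>\<^sup>+t. indicator (E_set T g lam s) (x, t) * ennreal (t powr (\<gamma> - 1)) \<partial>lborel) < y"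
        unfolding s_def by simp
    qed
  qed
qed




context setting
begin

abbreviation FF where "FF h lam \<equiv> (\<lambda>z. indicator (E_set T h lam (\<gamma> / p)) z * ennreal (snd z powr (\<gamma> - 1)))"

lemma FF_meas: "h \<in> Lp_space M p \<Longrightarrow> FF h lam \<in> borel_measurable (M \<Otimes>\<^sub>M lborel)"
  by (rule F_meas[OF meas])

lemma level_prod:
  assumes h: "h \<in> Lp_space M p"
  shows "level_integral M T h p \<gamma> lam = ennreal (lam powr p) * integral\<^sup>N (M \<Otimes>\<^sub>M lborel) (FF h lam)"
proof -
  have "(\<integral>\<^sup>+ x. \<integral>\<^sup>+ t. FF h lam (x, t) \<partial>lborel \<partial>M) = integral\<^sup>N (M \<Otimes>\<^sub>M lborel) (FF h lam)"
    by (rule sigma_finite_measure.nn_integral_fst[OF sigma_finite_lborel FF_meas[OF h]])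
  then show ?thesis unfolding level_integral_def by simp
qed

lemma level_upper:
  assumes h: "h \<in> Lp_space M p" and lam: "lam > 0"
  shows "level_integral M T h p \<gamma> lam \<le> ennreal (1 / \<gamma>) * ennreal ((C * Lp_norm M p h) powr p)"
proof -
  have m: "(\<lambda>x. \<integral>\<^sup>+ t. FF h lam (x, t) \<partial>lborel) \<in> borel_measurable M"
    by (rule sigma_finite_measure.borel_measurable_nn_integral_fst[OF sigma_finite_lborel FF_meas[OF h]])
  have "level_integral M T h p \<gamma> lam = (\<integral>\<^sup>+ x. ennreal (lam powr p) * \<integral>\<^sup>+ t. FF h lam (x, t) \<partial>lborel \<partial>M)"
    unfolding level_integral_def using nn_integral_cmult[OF m, of "ennreal (lam powr p)"] by simp
  also have "\<dots> \<le> (\<integral>\<^sup>+ x. ennreal (1 / \<gamma>) * epow (R h x) p \<partial>M)"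
    using level_le_R[OF h _ lam] by (intro nn_integral_mono) simp
  also have "\<dots> = ennreal (1 / \<gamma>) * (\<integral>\<^sup>+ x. epow (R h x) p \<partial>M)"
    by (rule nn_integral_cmult) (use R_meas[OF h] in measurable)
  also have "\<dots> \<le> ennreal (1 / \<gamma>) * ennreal ((C * Lp_norm M p h) powr p)"
    by (rule mult_left_mono[OF int_R[OF h]]) simp
  finally show ?thesis .
qed


lemma tri:
  assumes f: "f \<in> Lp_space M p" and g: "g \<in> Lp_space M p" and e: "0 < e" "e < 1" and lam: "lam > 0"
  shows "level_integral M T f p \<gamma> lam \<le> ennreal ((1 - e) powr (- p)) * level_integral M T g p \<gamma> ((1 - e) * lam)
     + ennreal (e powr (- p)) * level_integral M T (\<lambda>x. f x - g x) p \<gamma> (e * lam)"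
proof -
  define h where "h = (\<lambda>x. f x - g x)"
  have h: "h \<in> Lp_space M p" unfolding h_def using Lp_diff[OF f g] p by simp
  interpret P: pair_sigma_finite M lborel
    using sigma sigma_finite_lborel by (simp add: pair_sigma_finite_def)
  have fgh: "(\<lambda>y. g y + h y) = f" unfolding h_def by auto
  have ae_t: "AE x in M. 0 < t \<longrightarrow> \<bar>T t f x\<bar> \<le> \<bar>T t g x\<bar> + \<bar>T t h x\<bar>" for t
  proof (cases "0 < t")
    case True
    from subadd[OF g h True] show ?thesis unfolding fgh by simp
  qed simp
  define Q where "Q = (\<lambda>x t. FF f lam (x, t) \<le> FF g ((1 - e) * lam) (x, t) + FF h (e * lam) (x, t))"
  have Qpt: "Q x t" if "0 < t \<longrightarrow> \<bar>T t f x\<bar> \<le> \<bar>T t g x\<bar> + \<bar>T t h x\<bar>" for x t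
  proof (cases "(x, t) \<in> E_set T f lam (\<gamma> / p)")
    case True
    then have t: "0 < t" and lt: "lam * t powr (\<gamma> / p) < \<bar>T t f x\<bar>" by (auto simp: E_set_def)
    have "(x, t) \<in> E_set T g ((1 - e) * lam) (\<gamma> / p) \<or> (x, t) \<in> E_set T h (e * lam) (\<gamma> / p)"
    proof (rule ccontr)
      assume "\<not> ?thesis"
      then have "\<bar>T t g x\<bar> \<le> (1 - e) * lam * t powr (\<gamma> / p)" "\<bar>T t h x\<bar> \<le> e * lam * t powr (\<gamma> / p)"
        using t by (auto simp: E_set_def)
      then have "\<bar>T t g x\<bar> + \<bar>T t h x\<bar> \<le> lam * t powr (\<gamma> / p)" by (simp add: algebra_simps)
      with that t lt show False by simp
    qed
    then show ?thesis unfolding Q_def using True by (auto simp: indicator_def)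
  qed (simp add: Q_def)
  have Qset: "{z \<in> space (M \<Otimes>\<^sub>M lborel). Q (fst z) (snd z)} \<in> sets (M \<Otimes>\<^sub>M lborel)"
  proof -
    have "{z \<in> space (M \<Otimes>\<^sub>M lborel). Q (fst z) (snd z)} =
      {z \<in> space (M \<Otimes>\<^sub>M lborel). FF f lam z \<le> FF g ((1 - e) * lam) z + FF h (e * lam) z}"
      by (simp add: Q_def)
    also have "\<dots> \<in> sets (M \<Otimes>\<^sub>M lborel)"
      by (intro borel_measurable_le FF_meas[OF f] borel_measurable_add FF_meas[OF g] FF_meas[OF h])
    finally show ?thesis .
  qed
  have "AE t in lborel. AE x in M. Q x t"
  proof (rule AE_I2)
    fix t show "AE x in M. Q x t" using ae_t[of t] by eventually_elim (rule Qpt)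
  qed
  then have "AE x in M. AE t in lborel. Q x t" using P.AE_commute[OF Qset] by simp
  then have ae: "AE z in M \<Otimes>\<^sub>M lborel. Q (fst z) (snd z)"
    by (intro P.AE_pair_measure) (use Qset in auto)
  have "integral\<^sup>N (M \<Otimes>\<^sub>M lborel) (FF f lam) \<le> (\<integral>\<^sup>+ z. FF g ((1 - e) * lam) z + FF h (e * lam) z \<partial>(M \<Otimes>\<^sub>M lborel))"
    by (rule nn_integral_mono_AE) (use ae in \<open>auto simp: Q_def\<close>)
  also have "\<dots> = integral\<^sup>N (M \<Otimes>\<^sub>M lborel) (FF g ((1 - e) * lam)) + integral\<^sup>N (M \<Otimes>\<^sub>M lborel) (FF h (e * lam))"
    by (rule nn_integral_add) (intro FF_meas[OF g] FF_meas[OF h])+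
  finally have I: "integral\<^sup>N (M \<Otimes>\<^sub>M lborel) (FF f lam) \<le> integral\<^sup>N (M \<Otimes>\<^sub>M lborel) (FF g ((1 - e) * lam)) + integral\<^sup>N (M \<Otimes>\<^sub>M lborel) (FF h (e * lam))" .
  have cc: "a powr (- p) * ((a * lam) powr p) = lam powr p" if "0 < a" for a
  proof -
    have "a powr (- p) * ((a * lam) powr p) = (a powr (- p) * a powr p) * lam powr p"
      using that lam by (simp add: powr_mult)
    also have "a powr (- p) * a powr p = 1" using that by (simp add: powr_add[symmetric])
    finally show ?thesis by simp
  qed
  have c1: "ennreal (lam powr p) = ennreal ((1 - e) powr (- p)) * ennreal (((1 - e) * lam) powr p)"
    using e cc[of "1 - e"] by (simp add: ennreal_mult[symmetric])
  have c2: "ennreal (lam powr p) = ennreal (e powr (- p)) * ennreal ((e * lam) powr p)"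
    using e cc[of e] by (simp add: ennreal_mult[symmetric])
  have "level_integral M T f p \<gamma> lam \<le> ennreal (lam powr p) * (integral\<^sup>N (M \<Otimes>\<^sub>M lborel) (FF g ((1 - e) * lam)) + integral\<^sup>N (M \<Otimes>\<^sub>M lborel) (FF h (e * lam)))"
    unfolding level_prod[OF f] by (rule mult_left_mono[OF I]) simp
  also have "\<dots> = ennreal ((1 - e) powr (- p)) * level_integral M T g p \<gamma> ((1 - e) * lam)
     + ennreal (e powr (- p)) * level_integral M T h p \<gamma> (e * lam)"
    unfolding level_prod[OF g] level_prod[OF h] distrib_left
    by (subst c1, subst c2) (simp add: mult.assoc)
  finally show ?thesis unfolding h_def .
qed


lemma int_epowR_fin:
  assumes h: "h \<in> Lp_space M p"
  shows "(\<integral>\<^sup>+x. epow (R h x) p \<partial>M) < \<infinity>"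
  using int_R[OF h] by (rule le_less_trans) simp

lemma R_fin_ae:
  assumes h: "h \<in> Lp_space M p"
  shows "AE x in M. R h x < \<infinity>"
proof -
  have "AE x in M. epow (R h x) p \<noteq> \<infinity>"
    by (rule nn_integral_PInf_AE) (use epow_meas[OF R_meas[OF h]] int_epowR_fin[OF h] in auto)
  then show ?thesis by eventually_elim (auto simp: epow_def less_top[symmetric] split: if_splits)
qed

lemma dense_lim:
  assumes g: "g \<in> Lp_space M p" and conv: "AE x in M. ((\<lambda>t. T t g x) \<longlongrightarrow> g x) (at_right 0)"
  shows "((\<lambda>lam. level_integral M T g p \<gamma> lam) \<longlongrightarrow> ennreal (Np M p g / \<gamma>)) at_top"
proof -
  define u where "u = (\<lambda>lam x. ennreal (lam powr p) * \<integral>\<^sup>+ t. FF g lam (x, t) \<partial>lborel)"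
  define w where "w = (\<lambda>x. ennreal (1 / \<gamma>) * epow (R g x) p)"
  have um: "u lam \<in> borel_measurable M" for lam
    unfolding u_def by (intro borel_measurable_times_ennreal borel_measurable_const
        sigma_finite_measure.borel_measurable_nn_integral_fst[OF sigma_finite_lborel FF_meas[OF g]])
  have lev: "level_integral M T g p \<gamma> lam = integral\<^sup>N M (u lam)" for lam
    unfolding level_integral_def u_def
    using nn_integral_cmult[OF sigma_finite_measure.borel_measurable_nn_integral_fst[OF sigma_finite_lborel FF_meas[OF g]], where c="ennreal (lam powr p)"]
    by simp
  have wm: "w \<in> borel_measurable M" unfolding w_def using epow_meas[OF R_meas[OF g]] by measurable
  have wfin: "integral\<^sup>N M w < \<infinity>"
    unfolding w_def using int_epowR_fin[OF g] epow_meas[OF R_meas[OF g]]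
    by (subst nn_integral_cmult) (auto simp: ennreal_mult_less_top)
  have gm[measurable]: "g \<in> borel_measurable M" using g by (simp add: Lp_space_def)
  have gi: "integrable M (\<lambda>x. \<bar>g x\<bar> powr p)" using g by (simp add: Lp_space_def)
  have limx: "AE x in M. ((\<lambda>lam. u lam x) \<longlongrightarrow> ennreal (\<bar>g x\<bar> powr p / \<gamma>)) at_top"
    using conv R_fin_ae[OF g]
  proof (rule AE_mp[OF AE_conjI, OF _ _ AE_I2])
    fix x assume x: "x \<in> space M"
    show "((\<lambda>t. T t g x) \<longlongrightarrow> g x) (at_right 0) \<and> R g x < \<infinity> \<longrightarrow> ((\<lambda>lam. u lam x) \<longlongrightarrow> ennreal (\<bar>g x\<bar> powr p / \<gamma>)) at_top"
    proof safe
      assume l: "((\<lambda>t. T t g x) \<longlongrightarrow> g x) (at_right 0)" and fin: "R g x < \<infinity>"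
      show "((\<lambda>lam. u lam x) \<longlongrightarrow> ennreal (\<bar>g x\<bar> powr p / \<gamma>)) at_top"
        unfolding u_def snd_conv using p by (intro pt_lim[of p \<gamma> T g x, OF _ gamma R_ae[OF g x fin] l]) simp
    qed
  qed
  have intlim: "integral\<^sup>N M (\<lambda>x. ennreal (\<bar>g x\<bar> powr p / \<gamma>)) = ennreal (Np M p g / \<gamma>)"
    using gi gamma by (subst nn_integral_eq_integral) (auto simp: Np_def)
  show ?thesis
  proof (rule tendsto_at_topI_sequentially)
    fix X :: "nat \<Rightarrow> real" assume X: "filterlim X at_top sequentially"
    define Y where "Y = (\<lambda>n. max 1 (X n))"
    have Y: "filterlim Y at_top sequentially"
      by (rule filterlim_at_top_mono[OF X]) (auto simp: Y_def)
    have ev: "eventually (\<lambda>n. X n = Y n) sequentially"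
      using filterlim_at_top[THEN iffD1, OF X, rule_format, of 1] by eventually_elim (simp add: Y_def)
    have "(\<lambda>n. integral\<^sup>N M (u (Y n))) \<longlonglongrightarrow> integral\<^sup>N M (\<lambda>x. ennreal (\<bar>g x\<bar> powr p / \<gamma>))"
    proof (rule nn_integral_dominated_convergence[OF um _ wm _ wfin])
      show "(\<lambda>x. ennreal (\<bar>g x\<bar> powr p / \<gamma>)) \<in> borel_measurable M" by measurable
      show "AE x in M. u (Y j) x \<le> w x" for j
      proof (rule AE_I2)
        fix x assume x: "x \<in> space M"
        have "0 < Y j" by (simp add: Y_def)
        from level_le_R[OF g x this] show "u (Y j) x \<le> w x" by (simp add: u_def w_def)
      qed
      show "AE x in M. (\<lambda>i. u (Y i) x) \<longlonglongrightarrow> ennreal (\<bar>g x\<bar> powr p / \<gamma>)"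
        using limx by eventually_elim (rule filterlim_compose[OF _ Y])
    qed
    then have "(\<lambda>n. integral\<^sup>N M (u (Y n))) \<longlonglongrightarrow> ennreal (Np M p g / \<gamma>)" by (simp add: intlim)
    show "(\<lambda>n. level_integral M T g p \<gamma> (X n)) \<longlonglongrightarrow> ennreal (Np M p g / \<gamma>)"
    proof -
      have "eventually (\<lambda>n. integral\<^sup>N M (u (X n)) = integral\<^sup>N M (u (Y n))) sequentially"
        using ev by eventually_elim simp
      from tendsto_cong[OF this] \<open>(\<lambda>n. integral\<^sup>N M (u (Y n))) \<longlonglongrightarrow> ennreal (Np M p g / \<gamma>)\<close>
      show ?thesis unfolding lev by simp
    qed
  qed
qed

end



context setting
begin

definition phi where "phi h lam = enn2real (level_integral M T h p \<gamma> lam)"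

lemma Cp_eq: "h \<in> Lp_space M p \<Longrightarrow> (C * Lp_norm M p h) powr p = C powr p * Np M p h"
proof -
  have "(C * Lp_norm M p h) powr p = C powr p * Lp_norm M p h powr p"
    using Cpos by (auto intro!: powr_mult simp: Lp_norm_def)
  then show ?thesis using p by (simp add: Lp_norm_pow)
qed

lemma level_fin:
  assumes h: "h \<in> Lp_space M p" and lam: "lam > 0"
  shows "level_integral M T h p \<gamma> lam = ennreal (phi h lam)"
    and "phi h lam \<le> C powr p / \<gamma> * Np M p h"
    and "level_integral M T h p \<gamma> lam \<le> ennreal (C powr p / \<gamma> * Np M p h)"
proof -
  have b: "level_integral M T h p \<gamma> lam \<le> ennreal (C powr p / \<gamma> * Np M p h)"
    using level_upper[OF h lam] Cpos gamma Np_nonneg[of M p h]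
    by (simp add: Cp_eq[OF h] ennreal_mult[symmetric])
  then show "level_integral M T h p \<gamma> lam \<le> ennreal (C powr p / \<gamma> * Np M p h)" .
  have fin: "level_integral M T h p \<gamma> lam < \<infinity>" using b by (rule le_less_trans) simp
  then show e: "level_integral M T h p \<gamma> lam = ennreal (phi h lam)" unfolding phi_def by simp
  show "phi h lam \<le> C powr p / \<gamma> * Np M p h"
    using b Cpos gamma Np_nonneg[of M p h] unfolding e by simp
qed

lemma phi_nonneg: "phi h lam \<ge> 0" by (simp add: phi_def)

lemma tri_real:
  assumes f: "f \<in> Lp_space M p" and g: "g \<in> Lp_space M p" and e: "0 < e" "e < 1" and lam: "lam > 0"
  shows "phi f lam \<le> (1 - e) powr (- p) * phi g ((1 - e) * lam) + e powr (- p) * (C powr p / \<gamma> * Np M p (\<lambda>x. f x - g x))"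
proof -
  have h: "(\<lambda>x. f x - g x) \<in> Lp_space M p" using Lp_diff[OF f g] p by simp
  have l1: "(1 - e) * lam > 0" "e * lam > 0" using e lam by auto
  have nn: "0 \<le> C powr p / \<gamma> * Np M p (\<lambda>x. f x - g x)" using gamma Np_nonneg[of M p] by simp
  have "ennreal (phi f lam) \<le> ennreal ((1 - e) powr (- p)) * ennreal (phi g ((1 - e) * lam))
     + ennreal (e powr (- p)) * ennreal (C powr p / \<gamma> * Np M p (\<lambda>x. f x - g x))"
    using tri[OF f g e lam] level_fin(1)[OF f lam] level_fin(1)[OF g l1(1)]
      mult_left_mono[OF level_fin(3)[OF h l1(2)], of "ennreal (e powr (- p))"]
    by (auto elim!: order_trans intro: add_left_mono)
  also have "\<dots> = ennreal ((1 - e) powr (- p) * phi g ((1 - e) * lam)) + ennreal (e powr (- p) * (C powr p / \<gamma> * Np M p (\<lambda>x. f x - g x)))"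
    using nn phi_nonneg by (simp add: ennreal_mult[symmetric] del: ennreal_plus)
  also have "\<dots> = ennreal ((1 - e) powr (- p) * phi g ((1 - e) * lam) + e powr (- p) * (C powr p / \<gamma> * Np M p (\<lambda>x. f x - g x)))"
    by (rule ennreal_plus[symmetric], rule mult_nonneg_nonneg, simp, rule phi_nonneg, rule mult_nonneg_nonneg, simp, rule nn)
  finally show ?thesis
    by (subst (asm) ennreal_le_iff) (rule add_nonneg_nonneg, rule mult_nonneg_nonneg, simp, rule phi_nonneg, rule mult_nonneg_nonneg, simp, rule nn)
qed

lemma dense_real:
  assumes g: "g \<in> Lp_space M p" and conv: "AE x in M. ((\<lambda>t. T t g x) \<longlongrightarrow> g x) (at_right 0)"
  shows "(phi g \<longlongrightarrow> Np M p g / \<gamma>) at_top"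
proof -
  have "((\<lambda>lam. enn2real (level_integral M T g p \<gamma> lam)) \<longlongrightarrow> enn2real (ennreal (Np M p g / \<gamma>))) at_top"
    using dense_lim[OF g conv] by (intro tendsto_enn2real) simp_all
  then show ?thesis using Np_nonneg[of M p g] gamma unfolding phi_def[abs_def] by simp
qed

lemma Np_rel:
  assumes f: "f \<in> Lp_space M p" and g: "g \<in> Lp_space M p" and e: "0 < e" "e < 1"
  shows "Np M p g \<le> (1 - e) powr (1 - p) * Np M p f + e powr (1 - p) * Np M p (\<lambda>x. f x - g x)"
proof -
  have h: "(\<lambda>x. g x - f x) \<in> Lp_space M p" using Lp_diff[OF g f] p by simp
  have "Np M p (\<lambda>x. f x + (g x - f x)) \<le> (1 - e) powr (1 - p) * Np M p f + e powr (1 - p) * Np M p (\<lambda>x. g x - f x)"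
    using Lp_add_bound(2)[OF f h _ e] p by simp
  moreover have "Np M p (\<lambda>x. g x - f x) = Np M p (\<lambda>x. f x - g x)" unfolding Np_def by (simp add: abs_minus_commute)
  ultimately show ?thesis by simp
qed

lemma Np_small:
  assumes "Lp_norm M p h < k powr (1 / p)" "k > 0"
  shows "Np M p h < k"
proof -
  have "Lp_norm M p h powr p < (k powr (1 / p)) powr p"
    using assms p by (intro powr_less_mono2) (auto simp: Lp_norm_def)
  then show ?thesis using assms p by (simp add: Lp_norm_pow powr_powr)
qed

end



lemma approx_setup:
  fixes A d p :: real
  assumes A: "A \<ge> 0" and d: "d > 0" and p: "p > 0"
  shows "\<exists>e. 0 < e \<and> e < 1 \<and> ((1 - e) powr (- p) * (1 - e) powr (1 - p)) * A < A + d
     \<and> A - d < A / ((1 - e) powr (- p) * (1 - e) powr (1 - p))"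
proof -
  define th where "th = d / (A + 1)"
  have th: "th > 0" using A d by (simp add: th_def)
  have thA: "th * A < d" using A d by (simp add: th_def field_simps)
  have lim: "((\<lambda>e. (1 - e) powr (- p) * (1 - e) powr (1 - p)) \<longlongrightarrow> (1 - 0) powr (- p) * (1 - 0) powr (1 - p)) (at_right (0::real))"
    by (intro tendsto_intros) auto
  have "eventually (\<lambda>e. (1 - e) powr (- p) * (1 - e) powr (1 - p) < 1 + th) (at_right (0::real))"
    by (rule order_tendstoD(2)[OF lim]) (use th in simp)
  then obtain b where b: "b > 0" "\<And>e. 0 < e \<Longrightarrow> e < b \<Longrightarrow> (1 - e) powr (- p) * (1 - e) powr (1 - p) < 1 + th"
    unfolding eventually_at_right_field by auto
  define e where "e = min (b / 2) (1 / 2)"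
  have e: "0 < e" "e < 1" "e < b" using b by (auto simp: e_def)
  define k where "k = (1 - e) powr (- p) * (1 - e) powr (1 - p)"
  have k: "k < 1 + th" "k > 0" using b(2)[OF e(1) e(3)] e by (auto simp: k_def)
  have "k * A \<le> (1 + th) * A" using k A by (intro mult_right_mono) auto
  then have up: "k * A < A + d" using thA by (simp add: algebra_simps)
  have "A / (1 + th) \<le> A / k" using k A th by (intro divide_left_mono) auto
  moreover have "A - d < A / (1 + th)"
  proof -
    have "0 < d * th" using th d by simp
    then have "(A - d) * (1 + th) < A" using thA by (simp add: algebra_simps)
    then show ?thesis using th by (simp add: pos_less_divide_eq)
  qed
  ultimately have lo: "A - d < A / k" by simp
  show ?thesis using e up lo unfolding k_def by blast
qed


context setting
begin

lemma upper_ev: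
  assumes f: "f \<in> Lp_space M p"
    and Dsub: "D \<subseteq> Lp_space M p"
    and Dapp: "\<forall>f\<in>Lp_space M p. \<forall>\<epsilon>>0. \<exists>g\<in>D. Lp_norm M p (\<lambda>x. f x - g x) < \<epsilon>"
    and Dconv: "\<forall>g\<in>D. AE x in M. ((\<lambda>t. T t g x) \<longlongrightarrow> g x) (at_right 0)"
    and y: "Np M p f / \<gamma> < y"
  shows "eventually (\<lambda>lam. phi f lam < y) at_top"
proof -
  define A where "A = Np M p f / \<gamma>"
  have A0: "A \<ge> 0" using Np_nonneg[of M p f] gamma by (simp add: A_def)
  define d where "d = (y - A) / 2"
  have d: "d > 0" using y by (simp add: d_def A_def)
  obtain e where e: "0 < e" "e < 1" and up: "((1 - e) powr (- p) * (1 - e) powr (1 - p)) * A < A + d"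
    using approx_setup[OF A0 d, of p] p by auto
  define K1 where "K1 = (1 - e) powr (- p)"
  define K2 where "K2 = e powr (- p)"
  define K3 where "K3 = (1 - e) powr (1 - p)"
  define K4 where "K4 = e powr (1 - p)"
  define Cp where "Cp = C powr p"
  have K: "K1 > 0" "K2 > 0" "K3 > 0" "K4 > 0" "Cp > 0" using e Cpos by (auto simp: K1_def K2_def K3_def K4_def Cp_def)
  define S where "S = K1 * K4 / \<gamma> + K1 + K2 * Cp / \<gamma>"
  have S0: "S \<ge> 0" using K gamma by (simp add: S_def)
  define k where "k = d / (S + 1)"
  have k: "k > 0" using d S0 by (simp add: k_def)
  have kS: "k * S < d" using d S0 by (simp add: k_def field_simps)
  obtain g where g: "g \<in> D" and gn: "Lp_norm M p (\<lambda>x. f x - g x) < k powr (1 / p)"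
  proof -
    have "k powr (1 / p) > 0" using k by simp
    then show ?thesis using Dapp f that by blast
  qed
  have gL: "g \<in> Lp_space M p" using g Dsub by auto
  have Nfg: "Np M p (\<lambda>x. f x - g x) < k" by (rule Np_small[OF gn k])
  define B where "B = Np M p g / \<gamma>"
  have "(phi g \<longlongrightarrow> B) at_top" unfolding B_def by (rule dense_real[OF gL]) (use Dconv g in auto)
  from order_tendstoD(2)[OF this, of "B + k"] k obtain N where N: "\<And>lam. lam \<ge> N \<Longrightarrow> phi g lam < B + k"
    unfolding eventually_at_top_linorder by auto
  have Nrel: "Np M p g \<le> K3 * Np M p f + K4 * Np M p (\<lambda>x. f x - g x)"
    unfolding K3_def K4_def by (rule Np_rel[OF f gL e])
  show ?thesis
  proof (rule eventually_at_top_linorderI[of "max 1 (N / (1 - e))"])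
    fix lam assume lam: "max 1 (N / (1 - e)) \<le> lam"
    then have lam0: "lam > 0" by simp
    have "N / (1 - e) \<le> lam" using lam by simp
    then have "N \<le> (1 - e) * lam" using e by (simp add: divide_le_eq mult.commute)
    then have h2': "phi g ((1 - e) * lam) < B + k" by (rule N)
    have h1: "phi f lam \<le> K1 * phi g ((1 - e) * lam) + K2 * (Cp / \<gamma> * Np M p (\<lambda>x. f x - g x))"
      unfolding K1_def K2_def Cp_def by (rule tri_real[OF f gL e lam0])
    have h2: "K1 * phi g ((1 - e) * lam) \<le> K1 * (B + k)" using h2' K by simp
    have h3: "K2 * (Cp / \<gamma> * Np M p (\<lambda>x. f x - g x)) \<le> K2 * (Cp / \<gamma> * k)"
      using Nfg K gamma by (intro mult_left_mono) auto
    have "B \<le> (K3 * Np M p f + K4 * k) / \<gamma>"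
      unfolding B_def using Nrel Nfg K gamma by (intro divide_right_mono) (auto intro: order_trans add_left_mono)
    then have h4: "K1 * B \<le> K1 * ((K3 * Np M p f + K4 * k) / \<gamma>)" using K by (intro mult_left_mono) auto
    have h5: "K1 * ((K3 * Np M p f + K4 * k) / \<gamma>) = (K1 * K3) * A + k * (K1 * K4 / \<gamma>)"
      using gamma by (simp add: A_def field_simps)
    have h6: "k * S = k * (K1 * K4 / \<gamma>) + k * K1 + K2 * (Cp / \<gamma> * k)"
      by (simp add: S_def algebra_simps)
    have h7: "K1 * (B + k) = K1 * B + k * K1" by (simp add: algebra_simps)
    have "(K1 * K3) * A < A + d" using up by (simp add: K1_def K3_def)
    moreover have "y = A + 2 * d" unfolding d_def by (simp add: field_simps)
    ultimately show "phi f lam < y" using h1 h2 h3 h4 h5 h6 h7 kS by linarith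
  qed
qed


lemma lower_ev:
  assumes f: "f \<in> Lp_space M p"
    and Dsub: "D \<subseteq> Lp_space M p"
    and Dapp: "\<forall>f\<in>Lp_space M p. \<forall>\<epsilon>>0. \<exists>g\<in>D. Lp_norm M p (\<lambda>x. f x - g x) < \<epsilon>"
    and Dconv: "\<forall>g\<in>D. AE x in M. ((\<lambda>t. T t g x) \<longlongrightarrow> g x) (at_right 0)"
    and y: "y < Np M p f / \<gamma>"
  shows "eventually (\<lambda>lam. y < phi f lam) at_top"
proof -
  define A where "A = Np M p f / \<gamma>"
  have A0: "A \<ge> 0" using Np_nonneg[of M p f] gamma by (simp add: A_def)
  define d where "d = (A - y) / 2"
  have d: "d > 0" using y by (simp add: d_def A_def)
  have yd: "y = A - 2 * d" unfolding d_def by (simp add: field_simps)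
  obtain e where e: "0 < e" "e < 1" and lo: "A - d < A / ((1 - e) powr (- p) * (1 - e) powr (1 - p))"
    using approx_setup[OF A0 d, of p] p by auto
  define K1 where "K1 = (1 - e) powr (- p)"
  define K2 where "K2 = e powr (- p)"
  define K3 where "K3 = (1 - e) powr (1 - p)"
  define K4 where "K4 = e powr (1 - p)"
  define Cp where "Cp = C powr p"
  have K: "K1 > 0" "K2 > 0" "K3 > 0" "K4 > 0" "Cp > 0" using e Cpos by (auto simp: K1_def K2_def K3_def K4_def Cp_def)
  define S where "S = K4 / (\<gamma> * K3 * K1) + 1 / K1 + K2 * Cp / (\<gamma> * K1)"
  have S0: "S \<ge> 0" using K gamma by (simp add: S_def)
  define k where "k = d / (S + 1)"
  have k: "k > 0" using d S0 by (simp add: k_def)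
  have kS: "k * S < d" using d S0 by (simp add: k_def field_simps)
  obtain g where g: "g \<in> D" and gn: "Lp_norm M p (\<lambda>x. f x - g x) < k powr (1 / p)"
  proof -
    have "k powr (1 / p) > 0" using k by simp
    then show ?thesis using Dapp f that by blast
  qed
  have gL: "g \<in> Lp_space M p" using g Dsub by auto
  have Nfg: "Np M p (\<lambda>x. f x - g x) < k" by (rule Np_small[OF gn k])
  have Ngf: "Np M p (\<lambda>x. g x - f x) < k"
    using Nfg unfolding Np_def by (simp add: abs_minus_commute)
  define B where "B = Np M p g / \<gamma>"
  have "(phi g \<longlongrightarrow> B) at_top" unfolding B_def by (rule dense_real[OF gL]) (use Dconv g in auto)
  from order_tendstoD(1)[OF this, of "B - k"] k obtain N where N: "\<And>lam. lam \<ge> N \<Longrightarrow> B - k < phi g lam"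
    unfolding eventually_at_top_linorder by auto
  have Nrel: "Np M p f \<le> K3 * Np M p g + K4 * Np M p (\<lambda>x. g x - f x)"
    unfolding K3_def K4_def by (rule Np_rel[OF gL f e])
  have h4: "\<gamma> * A \<le> K3 * (\<gamma> * B) + K4 * k"
  proof -
    have "K4 * Np M p (\<lambda>x. g x - f x) \<le> K4 * k" using Ngf K by simp
    then show ?thesis using Nrel gamma by (simp add: A_def B_def)
  qed
  have hB: "A / K3 - K4 * k / (\<gamma> * K3) \<le> B"
  proof -
    have "A / K3 - K4 * k / (\<gamma> * K3) = (\<gamma> * A - K4 * k) / (\<gamma> * K3)" using K gamma by (simp add: field_simps)
    also have "\<dots> \<le> B" using h4 K gamma by (simp add: pos_divide_le_eq algebra_simps)
    finally show ?thesis .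
  qed
  show ?thesis
  proof (rule eventually_at_top_linorderI[of "max 1 (N * (1 - e))"])
    fix mu assume mu: "max 1 (N * (1 - e)) \<le> mu"
    define lam where "lam = mu / (1 - e)"
    have lam0: "lam > 0" using mu e by (simp add: lam_def)
    have lamN: "N \<le> lam" using mu e by (simp add: lam_def le_divide_eq)
    have mul: "(1 - e) * lam = mu" using e by (simp add: lam_def)
    have h1: "phi g lam \<le> K1 * phi f mu + K2 * (Cp / \<gamma> * Np M p (\<lambda>x. g x - f x))"
      using tri_real[OF gL f e lam0] unfolding K1_def K2_def Cp_def mul .
    have h2: "B - k < phi g lam" by (rule N[OF lamN])
    have h3: "K2 * (Cp / \<gamma> * Np M p (\<lambda>x. g x - f x)) \<le> K2 * (Cp / \<gamma> * k)"
      using Ngf K gamma by (intro mult_left_mono) auto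
    define X where "X = A / K3 - K4 * k / (\<gamma> * K3) - k - K2 * (Cp / \<gamma> * k)"
    have "X < K1 * phi f mu" using h1 h2 h3 hB unfolding X_def by linarith
    then have "X / K1 < phi f mu" using K by (simp add: pos_divide_less_eq mult.commute)
    moreover have "X / K1 = A / (K1 * K3) - k * S" using K gamma by (simp add: X_def S_def field_simps)
    moreover have "A - d < A / (K1 * K3)" using lo by (simp add: K1_def K3_def)
    ultimately show "y < phi f mu" using kS yd by linarith
  qed
qed


lemma main_loc:
  assumes dense: "\<exists>D \<subseteq> Lp_space M p.
        (\<forall>f\<in>Lp_space M p. \<forall>\<epsilon>>0. \<exists>g\<in>D. Lp_norm M p (\<lambda>x. f x - g x) < \<epsilon>) \<and>
        (\<forall>g\<in>D. AE x in M. ((\<lambda>t. T t g x) \<longlongrightarrow> g x) (at_right 0))"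
    and f: "f \<in> Lp_space M p"
  shows "\<exists>L. (level_integral M T f p \<gamma> \<longlongrightarrow> L) at_top \<and>
           ennreal (Lp_norm M p f powr p / \<gamma>) \<le> L \<and>
           L \<le> (SUP lam\<in>{0<..}. level_integral M T f p \<gamma> lam) \<and>
           (SUP lam\<in>{0<..}. level_integral M T f p \<gamma> lam) \<le> ennreal (C powr p / \<gamma> * Lp_norm M p f powr p)"
proof -
  obtain D where Dsub: "D \<subseteq> Lp_space M p"
    and Dapp: "\<forall>f\<in>Lp_space M p. \<forall>\<epsilon>>0. \<exists>g\<in>D. Lp_norm M p (\<lambda>x. f x - g x) < \<epsilon>"
    and Dconv: "\<forall>g\<in>D. AE x in M. ((\<lambda>t. T t g x) \<longlongrightarrow> g x) (at_right 0)"
    using dense by blast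
  define A where "A = Np M p f / \<gamma>"
  have Ae: "Lp_norm M p f powr p / \<gamma> = A" using p by (simp add: A_def Lp_norm_pow)
  have "(phi f \<longlongrightarrow> A) at_top"
  proof (rule order_tendstoI)
    fix y assume "y < A" then show "eventually (\<lambda>lam. y < phi f lam) at_top"
      by (intro lower_ev[OF f Dsub Dapp Dconv]) (simp add: A_def)
  next
    fix y assume "A < y" then show "eventually (\<lambda>lam. phi f lam < y) at_top"
      by (intro upper_ev[OF f Dsub Dapp Dconv]) (simp add: A_def)
  qed
  then have lim1: "((\<lambda>lam. ennreal (phi f lam)) \<longlongrightarrow> ennreal A) at_top" by (rule tendsto_ennrealI)
  have ev: "eventually (\<lambda>lam. level_integral M T f p \<gamma> lam = ennreal (phi f lam)) at_top"
    using eventually_gt_at_top[of 0] by eventually_elim (rule level_fin(1)[OF f])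
  have lim: "(level_integral M T f p \<gamma> \<longlongrightarrow> ennreal A) at_top"
    using tendsto_cong[OF ev] lim1 by simp
  have le_sup: "ennreal A \<le> (SUP lam\<in>{0<..}. level_integral M T f p \<gamma> lam)"
  proof (rule tendsto_le[OF trivial_limit_at_top_linorder tendsto_const lim])
    show "eventually (\<lambda>lam. level_integral M T f p \<gamma> lam \<le> (SUP lam\<in>{0<..}. level_integral M T f p \<gamma> lam)) at_top"
      using eventually_gt_at_top[of 0] by eventually_elim (auto intro: SUP_upper)
  qed
  have sup_le: "(SUP lam\<in>{0<..}. level_integral M T f p \<gamma> lam) \<le> ennreal (C powr p / \<gamma> * Lp_norm M p f powr p)"
  proof (rule SUP_least)
    fix lam :: real assume "lam \<in> {0<..}"
    then show "level_integral M T f p \<gamma> lam \<le> ennreal (C powr p / \<gamma> * Lp_norm M p f powr p)"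
      using level_fin(3)[OF f, of lam] p by (simp add: Lp_norm_pow)
  qed
  show ?thesis using lim le_sup sup_le Ae by (intro exI[of _ "ennreal A"]) simp
qed

end

theorem corollary2p1:
  fixes M :: "'a measure"
    and T :: "real \<Rightarrow> ('a \<Rightarrow> real) \<Rightarrow> 'a \<Rightarrow> real"
    and p \<gamma> C :: real
  assumes sigma: "sigma_finite_measure M"
    and p: "1 < p"
    and gamma: "\<gamma> > 0"
    and subadd: "\<And>f h t. f \<in> Lp_space M p \<Longrightarrow> h \<in> Lp_space M p \<Longrightarrow> t > 0 \<Longrightarrow>
        AE x in M. \<bar>T t (\<lambda>y. f y + h y) x\<bar> \<le> \<bar>T t f x\<bar> + \<bar>T t h x\<bar>"
    and homog: "\<And>f c t. f \<in> Lp_space M p \<Longrightarrow> t > 0 \<Longrightarrow>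
        AE x in M. \<bar>T t (\<lambda>y. c * f y) x\<bar> = \<bar>c\<bar> * \<bar>T t f x\<bar>"
    and meas: "\<And>f. f \<in> Lp_space M p \<Longrightarrow>
        (\<lambda>(x, t). T t f x) \<in> borel_measurable (M \<Otimes>\<^sub>M restrict_space lborel {0<..})"
    and Cpos: "C > 0"
    and maximal: "\<And>f. f \<in> Lp_space M p \<Longrightarrow>
        (\<integral>\<^sup>+ x. epow (maximal_fun T f x) p \<partial>M) \<le> ennreal ((C * Lp_norm M p f) powr p)"
    and dense: "\<exists>D \<subseteq> Lp_space M p.
        (\<forall>f\<in>Lp_space M p. \<forall>\<epsilon>>0. \<exists>g\<in>D. Lp_norm M p (\<lambda>x. f x - g x) < \<epsilon>) \<and>
        (\<forall>g\<in>D. AE x in M. ((\<lambda>t. T t g x) \<longlongrightarrow> g x) (at_right 0))"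
    and f: "f \<in> Lp_space M p"
  shows "\<exists>L. (level_integral M T f p \<gamma> \<longlongrightarrow> L) at_top \<and>
           ennreal (Lp_norm M p f powr p / \<gamma>) \<le> L \<and>
           L \<le> (SUP lam\<in>{0<..}. level_integral M T f p \<gamma> lam) \<and>
           (SUP lam\<in>{0<..}. level_integral M T f p \<gamma> lam) \<le> ennreal (C powr p / \<gamma> * Lp_norm M p f powr p)"
  proof -
  interpret setting M T p \<gamma> C
    by (rule setting.intro[OF sigma p gamma subadd meas Cpos maximal])
  show ?thesis by (rule main_loc[OF dense f])
qed

end
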